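(* Consider the noisy Hegselmann–Krause model with homogeneously stubborn agents described in the context, with confidence bound $\epsilon\in(0,1]$ and noise bound $\delta$ satisfying $0<\delta\le\frac{\epsilon}{2(n+1)}$. Suppose that almost surely there is a finite (possibly random) time $T\ge0$ such that $d_{\mathcal{V}}^{B_1}(T):=\max_{i\in\mathcal{V}}|x_i(T)-B_1|\le(n+1)\delta$. Then almost surely $d_{\mathcal{V}}\le 2\delta$ and $d_{\mathcal{V}}^{B_1}\le(n+1)\delta$, where $d_{\mathcal{V}}=\limsup_{t\to\infty}\max_{i,j\in\mathcal{V}}|x_i(t)-x_j(t)|$ and $d_{\mathcal{V}}^{B_1}=\limsup_{t\to\infty}\max_{i\in\mathcal{V}}|x_i(t)-B_1|$.
   Context: Regular agents: $\mathcal{V}=\{1,\dots,n\}$, with opinions $x_i(t)\in[0,1]$, $t=0,1,2,\dots$. Stubborn agents: a finite nonempty index set $\mathcal{B}_1$ disjoint from $\mathcal{V}$, with $x_k(t)\equiv B_1$ for all $k\in\mathcal{B}_1$ and all $t\ge0$, where $B_1\in[0,1]$ is fixed. For $i\in\mathcal{V}$, the neighbor set is $\mathcal{N}(i,x(t))=\{j\in\mathcal{V}\cup\mathcal{B}_1: |x_j(t)-x_i(t)|\le\epsilon\}$ (it contains $i$). The update for $i\in\mathcal{V}$ is $x_i^*(t)=|\mathcal{N}(i,x(t))|^{-1}\sum_{j\in\mathcal{N}(i,x(t))}x_j(t)+\xi_i(t+1)$, and $x_i(t+1)=1$ if $x_i^*(t)>1$, $x_i(t+1)=x_i^*(t)$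 if $x_i^*(t)\in[0,1]$, $x_i(t+1)=0$ if $x_i^*(t)<0$. The noises $\{\xi_i(t)\}_{i\in\mathcal{V},t\ge1}$ are i.i.d. real random variables with $E\xi_1(1)=0$, $E\xi_1(1)^2>0$ and $|\xi_1(1)|\le\delta$ almost surely. *)

theory Defs
  imports "HOL-Probability.Probability"
begin

text \<open>Regular agents are indexed by V = {1..n}, stubborn agents by a finite set K of
  natural numbers disjoint from V. A state is a function y :: nat => real.\<close>

definition hk_nbr :: "nat set \<Rightarrow> nat set \<Rightarrow> real \<Rightarrow> (nat \<Rightarrow> real) \<Rightarrow> nat \<Rightarrow> nat set" where
  "hk_nbr V K eps y i = {j \<in> V \<union> K. \<bar>y j - y i\<bar> \<le> eps}"

definition clip01 :: "real \<Rightarrow> real" where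
  "clip01 z = (if z > 1 then 1 else if z < 0 then 0 else z)"

text \<open>Trajectory of the noisy HK model with stubborn agents: x0 is the initial state
  of the regular agents, B1 the stubborn opinion, xi j t the noise realisation
  of agent j at time t (t >= 1).\<close>

primrec hk_traj :: "nat set \<Rightarrow> nat set \<Rightarrow> real \<Rightarrow> real \<Rightarrow> (nat \<Rightarrow> real)
    \<Rightarrow> (nat \<Rightarrow> nat \<Rightarrow> real) \<Rightarrow> nat \<Rightarrow> nat \<Rightarrow> real" where
  "hk_traj V K B1 eps x0 xi 0 = (\<lambda>j. if j \<in> K then B1 else x0 j)"
| "hk_traj V K B1 eps x0 xi (Suc t) =
     (let y = hk_traj V K B1 eps x0 xi t in
      (\<lambda>j. if j \<in> K then B1
           else if j \<in> V then
             clip01 ((\<Sum>k\<in>hk_nbr V K eps y j. y k) / real (card (hk_nbr V K eps y j))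
                     + xi j (Suc t))
           else y j))"

end

theory Submission
  imports Defs
begin

lemma clip01_lip: "\<bar>clip01 z - clip01 w\<bar> \<le> \<bar>z - w\<bar>"
  unfolding clip01_def by auto

lemma clip01_B: "0 \<le> b \<Longrightarrow> b \<le> 1 \<Longrightarrow> \<bar>clip01 z - b\<bar> \<le> \<bar>z - b\<bar>"
  unfolding clip01_def by auto

lemma traj_K: "k \<in> K \<Longrightarrow> hk_traj V K B1 eps x0 xi t k = B1"
  by (cases t) (auto simp: Let_def)

lemma avg_bound:
  fixes y :: "nat \<Rightarrow> real"
  assumes fin: "finite K" and disj: "K \<inter> {1..n} = {}" and n1: "n \<ge> 1" and Kne: "K \<noteq> {}"
    and yK: "\<And>k. k \<in> K \<Longrightarrow> y k = B1"
    and yV: "\<And>k. k \<in> {1..n} \<Longrightarrow> \<bar>y k - B1\<bar> \<le> (real n + 1) * delta"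
    and dpos: "0 < delta"
  shows "\<bar>(\<Sum>k\<in>{1..n} \<union> K. y k) / real (card ({1..n} \<union> K)) - B1\<bar> \<le> real n * delta"
proof -
  let ?S = "{1..n} \<union> K"
  have cS: "card ?S = n + card K" using fin disj card_Un_disjoint[of "{1..n}" K] by auto
  have cK: "card K \<ge> 1" using fin Kne by (simp add: Suc_le_eq card_gt_0_iff)
  have cpos: "real (card ?S) \<ge> real n + 1" using cS cK by simp
  have "(\<Sum>k\<in>?S. y k) / real (card ?S) - B1 = (\<Sum>k\<in>?S. y k - B1) / real (card ?S)"
    using cpos by (simp add: sum_subtractf field_simps)
  also have "(\<Sum>k\<in>?S. y k - B1) = (\<Sum>k\<in>{1..n}. y k - B1)"
    using fin yK by (intro sum.mono_neutral_right) auto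
  finally have eq: "(\<Sum>k\<in>?S. y k) / real (card ?S) - B1 = (\<Sum>k\<in>{1..n}. y k - B1) / real (card ?S)" .
  have "\<bar>\<Sum>k\<in>{1..n}. y k - B1\<bar> \<le> (\<Sum>k\<in>{1..n}. \<bar>y k - B1\<bar>)" by (rule sum_abs)
  also have "\<dots> \<le> (\<Sum>k\<in>{1..n}. (real n + 1) * delta)" using yV by (intro sum_mono) auto
  also have "\<dots> = real n * ((real n + 1) * delta)" by simp
  finally have sb: "\<bar>\<Sum>k\<in>{1..n}. y k - B1\<bar> \<le> real n * ((real n + 1) * delta)" .
  have "\<bar>(\<Sum>k\<in>{1..n}. y k - B1) / real (card ?S)\<bar> = \<bar>\<Sum>k\<in>{1..n}. y k - B1\<bar> / real (card ?S)"
    by simp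
  also have "\<dots> \<le> real n * ((real n + 1) * delta) / (real n + 1)"
    using sb cpos dpos by (intro frac_le) auto
  also have "\<dots> = real n * delta" by simp
  finally show ?thesis using eq by simp
qed

lemma step:
  fixes xi :: "nat \<Rightarrow> nat \<Rightarrow> real"
  assumes fin: "finite K" and disj: "K \<inter> {1..n} = {}" and n1: "n \<ge> 1" and Kne: "K \<noteq> {}"
    and B: "0 \<le> B1" "B1 \<le> 1" and dpos: "0 < delta" and de: "delta \<le> eps / (2 * (real n + 1))"
    and noise: "\<And>i. i \<in> {1..n} \<Longrightarrow> \<bar>xi i (Suc t)\<bar> \<le> delta"
    and inv: "\<And>i. i \<in> {1..n} \<Longrightarrow> \<bar>hk_traj {1..n} K B1 eps x0 xi t i - B1\<bar> \<le> (real n + 1) * delta"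
  shows "(\<forall>i\<in>{1..n}. \<bar>hk_traj {1..n} K B1 eps x0 xi (Suc t) i - B1\<bar> \<le> (real n + 1) * delta)
       \<and> (\<forall>i\<in>{1..n}. \<forall>j\<in>{1..n}. \<bar>hk_traj {1..n} K B1 eps x0 xi (Suc t) i - hk_traj {1..n} K B1 eps x0 xi (Suc t) j\<bar> \<le> 2 * delta)"
proof -
  define y where "y = hk_traj {1..n} K B1 eps x0 xi t"
  define A where "A = (\<Sum>k\<in>{1..n} \<union> K. y k) / real (card ({1..n} \<union> K))"
  have yK: "\<And>k. k \<in> K \<Longrightarrow> y k = B1" unfolding y_def by (rule traj_K)
  have yV: "\<And>k. k \<in> {1..n} \<Longrightarrow> \<bar>y k - B1\<bar> \<le> (real n + 1) * delta" using inv y_def by simp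
  have h2: "2 * ((real n + 1) * delta) \<le> eps" using de by (simp add: field_simps)
  have nb: "hk_nbr {1..n} K eps y i = {1..n} \<union> K" if i: "i \<in> {1..n}" for i
  proof -
    have "\<bar>y j - y i\<bar> \<le> eps" if j: "j \<in> {1..n} \<union> K" for j
    proof -
      have a: "\<bar>y j - B1\<bar> \<le> (real n + 1) * delta" using j yK yV dpos by auto
      have b: "\<bar>y i - B1\<bar> \<le> (real n + 1) * delta" using i yV by auto
      have "\<bar>y j - y i\<bar> \<le> \<bar>y j - B1\<bar> + \<bar>y i - B1\<bar>" by linarith
      then show ?thesis using a b h2 by linarith
    qed
    then show ?thesis unfolding hk_nbr_def by auto
  qed
  have val: "hk_traj {1..n} K B1 eps x0 xi (Suc t) i = clip01 (A + xi i (Suc t))" if i: "i \<in> {1..n}" for i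
  proof -
    have "hk_traj {1..n} K B1 eps x0 xi (Suc t) i = clip01 ((\<Sum>k\<in>hk_nbr {1..n} K eps y i. y k) / real (card (hk_nbr {1..n} K eps y i)) + xi i (Suc t))"
      using i disj unfolding y_def by (auto simp: Let_def)
    then show ?thesis unfolding nb[OF i] A_def .
  qed
  have Ab: "\<bar>A - B1\<bar> \<le> real n * delta" unfolding A_def
    by (rule avg_bound[OF fin disj n1 Kne yK yV dpos])
  have P1: "\<bar>hk_traj {1..n} K B1 eps x0 xi (Suc t) i - B1\<bar> \<le> (real n + 1) * delta" if i: "i \<in> {1..n}" for i
  proof -
    have "\<bar>clip01 (A + xi i (Suc t)) - B1\<bar> \<le> \<bar>A + xi i (Suc t) - B1\<bar>" using clip01_B B by blast
    also have "\<dots> \<le> \<bar>A - B1\<bar> + \<bar>xi i (Suc t)\<bar>" by linarith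
    also have "\<dots> \<le> (real n + 1) * delta" using Ab noise[OF i] by (simp add: algebra_simps)
    finally show ?thesis using val[OF i] by simp
  qed
  have P2: "\<bar>hk_traj {1..n} K B1 eps x0 xi (Suc t) i - hk_traj {1..n} K B1 eps x0 xi (Suc t) j\<bar> \<le> 2 * delta"
    if i: "i \<in> {1..n}" and j: "j \<in> {1..n}" for i j
  proof -
    have "\<bar>clip01 (A + xi i (Suc t)) - clip01 (A + xi j (Suc t))\<bar> \<le> \<bar>(A + xi i (Suc t)) - (A + xi j (Suc t))\<bar>"
      by (rule clip01_lip)
    also have "\<dots> \<le> 2 * delta" using noise[OF i] noise[OF j] by linarith
    finally show ?thesis using val[OF i] val[OF j] by simp
  qed
  show ?thesis using P1 P2 by blast
qed

lemma det:
  fixes xi :: "nat \<Rightarrow> nat \<Rightarrow> real"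
  assumes fin: "finite K" and disj: "K \<inter> {1..n} = {}" and n1: "n \<ge> 1" and Kne: "K \<noteq> {}"
    and B: "0 \<le> B1" "B1 \<le> 1" and dpos: "0 < delta" and de: "delta \<le> eps / (2 * (real n + 1))"
    and noise: "\<forall>i t. i \<in> {1..n} \<longrightarrow> t \<ge> 1 \<longrightarrow> \<bar>xi i t\<bar> \<le> delta"
    and T: "\<exists>T. Max ((\<lambda>i. \<bar>hk_traj {1..n} K B1 eps x0 xi T i - B1\<bar>) ` {1..n}) \<le> (real n + 1) * delta"
  shows "limsup (\<lambda>t. ereal (Max ((\<lambda>(i, j). \<bar>hk_traj {1..n} K B1 eps x0 xi t i
                                       - hk_traj {1..n} K B1 eps x0 xi t j\<bar>) ` ({1..n} \<times> {1..n}))))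
       \<le> ereal (2 * delta)
   \<and> limsup (\<lambda>t. ereal (Max ((\<lambda>i. \<bar>hk_traj {1..n} K B1 eps x0 xi t i - B1\<bar>) ` {1..n})))
       \<le> ereal ((real n + 1) * delta)"
proof -
  define tr where "tr = hk_traj {1..n} K B1 eps x0 xi"
  obtain T where T: "Max ((\<lambda>i. \<bar>tr T i - B1\<bar>) ` {1..n}) \<le> (real n + 1) * delta"
    using T tr_def by auto
  have ne: "{1..n} \<noteq> {}" using n1 by auto
  have inv0: "\<forall>i\<in>{1..n}. \<bar>tr T i - B1\<bar> \<le> (real n + 1) * delta"
    using T ne by (simp add: Max_le_iff)
  have nz: "\<And>t i. i \<in> {1..n} \<Longrightarrow> \<bar>xi i (Suc t)\<bar> \<le> delta" using noise by auto
  have inv: "\<forall>i\<in>{1..n}. \<bar>tr (T + k) i - B1\<bar> \<le> (real n + 1) * delta" for k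
  proof (induction k)
    case 0 then show ?case using inv0 by simp
  next
    case (Suc k)
    have "\<forall>i\<in>{1..n}. \<bar>tr (Suc (T + k)) i - B1\<bar> \<le> (real n + 1) * delta"
      using step[where t="T + k" and ?x0.0=x0 and xi=xi, OF fin disj n1 Kne B dpos de nz] Suc unfolding tr_def by blast
    then show ?case by simp
  qed
  have pair: "\<forall>i\<in>{1..n}. \<forall>j\<in>{1..n}. \<bar>tr (Suc (T + k)) i - tr (Suc (T + k)) j\<bar> \<le> 2 * delta" for k
    using step[where t="T + k" and ?x0.0=x0 and xi=xi, OF fin disj n1 Kne B dpos de nz] inv[of k] unfolding tr_def by blast
  have e1: "eventually (\<lambda>t. ereal (Max ((\<lambda>(i, j). \<bar>tr t i - tr t j\<bar>) ` ({1..n} \<times> {1..n}))) \<le> ereal (2 * delta)) sequentially"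
  proof (rule eventually_sequentiallyI[of "Suc T"])
    fix t assume "Suc T \<le> t"
    then obtain k where tk: "t = Suc (T + k)" by (metis add_Suc le_iff_add)
    show "ereal (Max ((\<lambda>(i, j). \<bar>tr t i - tr t j\<bar>) ` ({1..n} \<times> {1..n}))) \<le> ereal (2 * delta)"
      using pair[of k] ne tk by (auto simp: Max_le_iff)
  qed
  have e2: "eventually (\<lambda>t. ereal (Max ((\<lambda>i. \<bar>tr t i - B1\<bar>) ` {1..n})) \<le> ereal ((real n + 1) * delta)) sequentially"
  proof (rule eventually_sequentiallyI[of T])
    fix t assume "T \<le> t"
    then obtain k where tk: "t = T + k" by (metis le_iff_add)
    show "ereal (Max ((\<lambda>i. \<bar>tr t i - B1\<bar>) ` {1..n})) \<le> ereal ((real n + 1) * delta)"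
      using inv[of k] ne tk by (auto simp: Max_le_iff)
  qed
  show ?thesis using Limsup_bounded[OF e1] Limsup_bounded[OF e2] unfolding tr_def by simp
qed

theorem lemma3:
  fixes M :: "'a measure" and n :: nat and K :: "nat set"
    and B1 eps delta :: real and x0 :: "nat \<Rightarrow> real"
    and \<xi> :: "nat \<Rightarrow> nat \<Rightarrow> 'a \<Rightarrow> real"
  assumes "prob_space M"
    and "n \<ge> 1"
    and "finite K" "K \<noteq> {}" "K \<inter> {1..n} = {}"
    and "0 \<le> B1" "B1 \<le> 1"
    and "\<And>i. i \<in> {1..n} \<Longrightarrow> 0 \<le> x0 i \<and> x0 i \<le> 1"
    and "0 < eps" "eps \<le> 1"
    and "0 < delta" "delta \<le> eps / (2 * (real n + 1))"
    and "\<And>i t. i \<in> {1..n} \<Longrightarrow> t \<ge> 1 \<Longrightarrow> \<xi> i t \<in> borel_measurable M"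
    and "prob_space.indep_vars M (\<lambda>_. borel) (\<lambda>(i, t). \<xi> i t) ({1..n} \<times> {1..})"
    and "\<And>i t. i \<in> {1..n} \<Longrightarrow> t \<ge> 1 \<Longrightarrow> distr M borel (\<xi> i t) = distr M borel (\<xi> 1 1)"
    and "prob_space.expectation M (\<xi> 1 1) = 0"
    and "prob_space.expectation M (\<lambda>\<omega>. (\<xi> 1 1 \<omega>)\<^sup>2) > 0"
    and "AE \<omega> in M. \<bar>\<xi> 1 1 \<omega>\<bar> \<le> delta"
    and "AE \<omega> in M. \<exists>T. Max ((\<lambda>i. \<bar>hk_traj {1..n} K B1 eps x0 (\<lambda>j t. \<xi> j t \<omega>) T i - B1\<bar>) ` {1..n})
                          \<le> (real n + 1) * delta"
  shows "AE \<omega> in M.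
     limsup (\<lambda>t. ereal (Max ((\<lambda>(i, j). \<bar>hk_traj {1..n} K B1 eps x0 (\<lambda>j t. \<xi> j t \<omega>) t i
                                       - hk_traj {1..n} K B1 eps x0 (\<lambda>j t. \<xi> j t \<omega>) t j\<bar>) ` ({1..n} \<times> {1..n}))))
       \<le> ereal (2 * delta)
   \<and> limsup (\<lambda>t. ereal (Max ((\<lambda>i. \<bar>hk_traj {1..n} K B1 eps x0 (\<lambda>j t. \<xi> j t \<omega>) t i - B1\<bar>) ` {1..n})))
       \<le> ereal ((real n + 1) * delta)"
proof -
  have m11: "\<xi> 1 1 \<in> borel_measurable M" using assms(2,13) by auto
  have sb: "{x \<in> space borel. \<bar>x::real\<bar> \<le> delta} \<in> sets borel" by measurable
  have each: "AE \<omega> in M. \<bar>\<xi> i t \<omega>\<bar> \<le> delta" if i: "i \<in> {1..n}" and t: "t \<ge> 1" for i t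
  proof -
    have "AE x in distr M borel (\<xi> 1 1). \<bar>x\<bar> \<le> delta"
      using AE_distr_iff[OF m11 sb] assms(18) by simp
    then have "AE x in distr M borel (\<xi> i t). \<bar>x\<bar> \<le> delta" unfolding assms(15)[OF i t] .
    then show ?thesis using AE_distr_iff[OF assms(13)[OF i t] sb] by simp
  qed
  have all: "AE \<omega> in M. \<forall>i t. i \<in> {1..n} \<longrightarrow> t \<ge> 1 \<longrightarrow> \<bar>\<xi> i t \<omega>\<bar> \<le> delta"
    unfolding AE_all_countable using each by auto
  show ?thesis
    using all assms(19)
  proof eventually_elim
    case (elim \<omega>)
    show ?case
      by (rule det[OF assms(3) assms(5) assms(2) assms(4) assms(6) assms(7) assms(11) assms(12)])
        (use elim in auto)
  qed
qed

end
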